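(* Let $\Gamma$ be a $\Bbbk$-algebra and $\sim$ an equivalence relation on $\mathrm{cfs}(\Gamma)$. If $V$ is a finite-dimensional block module, then every composition factor of $V$ is isomorphic to $S_{\mathfrak m}$ for some $\mathfrak m\in B$ with $B\in\mathrm{Supp}(V)$.
   Context: $\mathrm{cfs}(\Gamma)$: maximal two-sided ideals $\mathfrak m$ of $\Gamma$ with $\dim\Gamma/\mathfrak m<\infty$; $S_{\mathfrak m}$ is the unique simple $\Gamma/\mathfrak m$-module. For a class $B$, $\mathcal W(B)=\{\mathfrak m_1\cdots\mathfrak m_k:k\ge0,\mathfrak m_i\in B\}$; for a $\Gamma$-module $V$, $V(B)=\{v:\mathfrak mv=0$ for some $\mathfrak m\in\mathcal W(B)\}$. $V$ is a block module if $V=\bigoplus_BV(B)$; $\mathrm{Supp}(V)=\{B:V(B)\neq0\}$. *)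

theory Defs
  imports Main
begin

text \<open>The algebra Gamma is a type 'a of class ring_1 (associative, unital,
  possibly noncommutative). It is a k-algebra via a unital ring homomorphism
  amap from the field 'k into the centre of Gamma. A (left) Gamma-module V is a
  type 'v of class ab_group_add together with an action act; the k-vector-space
  structure of V is the one induced by act (amap c).\<close>

definition k_algebra :: "('k::field \<Rightarrow> 'a::ring_1) \<Rightarrow> bool" where
  "k_algebra amap \<longleftrightarrow>
     amap 1 = 1 \<and>
     (\<forall>c d. amap (c + d) = amap c + amap d) \<and>
     (\<forall>c d. amap (c * d) = amap c * amap d) \<and>
     (\<forall>c x. amap c * x = x * amap c)"

definition gmodule :: "('a::ring_1 \<Rightarrow> 'v::ab_group_add \<Rightarrow> 'v) \<Rightarrow> bool" where
  "gmodule act \<longleftrightarrow>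
     (\<forall>v. act 1 v = v) \<and>
     (\<forall>a b v. act (a * b) v = act a (act b v)) \<and>
     (\<forall>a b v. act (a + b) v = act a v + act b v) \<and>
     (\<forall>a v w. act a (v + w) = act a v + act a w)"

definition two_sided_ideal :: "'a::ring_1 set \<Rightarrow> bool" where
  "two_sided_ideal I \<longleftrightarrow>
     0 \<in> I \<and> (\<forall>x\<in>I. \<forall>y\<in>I. x + y \<in> I) \<and> (\<forall>x\<in>I. - x \<in> I) \<and>
     (\<forall>x\<in>I. \<forall>r. r * x \<in> I \<and> x * r \<in> I)"

definition maximal_two_sided_ideal :: "'a::ring_1 set \<Rightarrow> bool" where
  "maximal_two_sided_ideal I \<longleftrightarrow>
     two_sided_ideal I \<and> I \<noteq> UNIV \<and>
     (\<forall>J. two_sided_ideal J \<and> I \<subseteq> J \<longrightarrow> J = I \<or> J = UNIV)"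

text \<open>dim_k (Gamma / m) < infinity: Gamma = span_k F + m for some finite F.\<close>
definition finite_codim :: "('k::field \<Rightarrow> 'a::ring_1) \<Rightarrow> 'a set \<Rightarrow> bool" where
  "finite_codim amap m \<longleftrightarrow>
     (\<exists>F. finite F \<and> (\<forall>x. \<exists>c. x - (\<Sum>f\<in>F. amap (c f) * f) \<in> m))"

definition cfs :: "('k::field \<Rightarrow> 'a::ring_1) \<Rightarrow> 'a set set" where
  "cfs amap = {m. maximal_two_sided_ideal m \<and> finite_codim amap m}"

definition ideal_mult :: "'a::ring_1 set \<Rightarrow> 'a set \<Rightarrow> 'a set" where
  "ideal_mult I J = {\<Sum>i<n. f i * g i | (n::nat) (f::nat \<Rightarrow> 'a) (g::nat \<Rightarrow> 'a). \<forall>i<n. f i \<in> I \<and> g i \<in> J}"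

fun ideal_prod :: "'a::ring_1 set list \<Rightarrow> 'a set" where
  "ideal_prod [] = UNIV"
| "ideal_prod (I # Is) = ideal_mult I (ideal_prod Is)"

definition W :: "'a::ring_1 set set \<Rightarrow> 'a set set" where
  "W B = {ideal_prod ms | ms. set ms \<subseteq> B}"

definition Vpart :: "('a::ring_1 \<Rightarrow> 'v::ab_group_add \<Rightarrow> 'v) \<Rightarrow> 'a set set \<Rightarrow> 'v set" where
  "Vpart act B = {v. \<exists>m\<in>W B. \<forall>x\<in>m. act x v = 0}"

text \<open>The blocks are the equivalence classes cfs(Gamma) // R.
  V is a block module if V is the (internal) direct sum of the V(B).\<close>
definition block_module ::
  "('k::field \<Rightarrow> 'a::ring_1) \<Rightarrow> 'a set rel \<Rightarrow> ('a \<Rightarrow> 'v::ab_group_add \<Rightarrow> 'v) \<Rightarrow> bool" where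
  "block_module amap R act \<longleftrightarrow>
     (\<forall>v. \<exists>Bs f. finite Bs \<and> Bs \<subseteq> cfs amap // R \<and>
            (\<forall>B\<in>Bs. f B \<in> Vpart act B) \<and> v = (\<Sum>B\<in>Bs. f B)) \<and>
     (\<forall>Bs f. finite Bs \<and> Bs \<subseteq> cfs amap // R \<and>
            (\<forall>B\<in>Bs. f B \<in> Vpart act B) \<and> (\<Sum>B\<in>Bs. f B) = 0
            \<longrightarrow> (\<forall>B\<in>Bs. f B = 0))"

definition Supp ::
  "('k::field \<Rightarrow> 'a::ring_1) \<Rightarrow> 'a set rel \<Rightarrow> ('a \<Rightarrow> 'v::ab_group_add \<Rightarrow> 'v) \<Rightarrow> 'a set set set" where
  "Supp amap R act = {B \<in> cfs amap // R. Vpart act B \<noteq> {0}}"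

definition fin_dim :: "('k::field \<Rightarrow> 'a::ring_1) \<Rightarrow> ('a \<Rightarrow> 'v::ab_group_add \<Rightarrow> 'v) \<Rightarrow> bool" where
  "fin_dim amap act \<longleftrightarrow>
     (\<exists>F. finite F \<and> (\<forall>v. \<exists>c. v = (\<Sum>f\<in>F. act (amap (c f)) f)))"

definition submodule :: "('a::ring_1 \<Rightarrow> 'v::ab_group_add \<Rightarrow> 'v) \<Rightarrow> 'v set \<Rightarrow> bool" where
  "submodule act N \<longleftrightarrow>
     0 \<in> N \<and> (\<forall>v\<in>N. \<forall>w\<in>N. v + w \<in> N) \<and> (\<forall>a. \<forall>v\<in>N. act a v \<in> N)"

definition simple_subquot :: "('a::ring_1 \<Rightarrow> 'v::ab_group_add \<Rightarrow> 'v) \<Rightarrow> 'v set \<Rightarrow> 'v set \<Rightarrow> bool" where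
  "simple_subquot act N M \<longleftrightarrow>
     submodule act N \<and> submodule act M \<and> N \<subset> M \<and>
     (\<forall>L. submodule act L \<and> N \<subseteq> L \<and> L \<subseteq> M \<longrightarrow> L = N \<or> L = M)"

definition composition_series :: "('a::ring_1 \<Rightarrow> 'v::ab_group_add \<Rightarrow> 'v) \<Rightarrow> 'v set list \<Rightarrow> bool" where
  "composition_series act Vs \<longleftrightarrow>
     Vs \<noteq> [] \<and> hd Vs = {0} \<and> last Vs = UNIV \<and>
     (\<forall>i. Suc i < length Vs \<longrightarrow> simple_subquot act (Vs ! i) (Vs ! Suc i))"

text \<open>(N, M) represents the composition factor M/N of V.\<close>
definition composition_factor :: "('a::ring_1 \<Rightarrow> 'v::ab_group_add \<Rightarrow> 'v) \<Rightarrow> 'v set \<Rightarrow> 'v set \<Rightarrow> bool" where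
  "composition_factor act N M \<longleftrightarrow>
     (\<exists>Vs i. composition_series act Vs \<and> Suc i < length Vs \<and> N = Vs ! i \<and> M = Vs ! Suc i)"

text \<open>S_m is the unique simple Gamma/m-module (inflated to Gamma). A simple subquotient
  M/N is isomorphic to S_m iff it is a (simple) Gamma/m-module, i.e. iff m annihilates M/N.\<close>
definition subquot_iso_S :: "('a::ring_1 \<Rightarrow> 'v::ab_group_add \<Rightarrow> 'v) \<Rightarrow> 'a set \<Rightarrow> 'v set \<Rightarrow> 'v set \<Rightarrow> bool" where
  "subquot_iso_S act m N M \<longleftrightarrow> simple_subquot act N M \<and> (\<forall>x\<in>m. \<forall>v\<in>M. act x v \<in> N)"

end

theory Submission
  imports Defs
begin

lemma act0: assumes "gmodule act" shows "act a 0 = 0" and "act 0 v = 0"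
proof -
  have "act a (0+0) = act a 0 + act a 0" using assms unfolding gmodule_def by blast
  then show "act a 0 = 0" by simp
  have "act (0+0) v = act 0 v + act 0 v" using assms unfolding gmodule_def by blast
  then show "act 0 v = 0" by simp
qed

lemma act_sum: assumes "gmodule act" and "finite I"
  shows "act y (\<Sum>i\<in>I. g i) = (\<Sum>i\<in>I. act y (g i))"
  using assms(2)
proof (induction I rule: finite_induct)
  case empty then show ?case using act0[OF assms(1)] by simp
next
  case (insert i I) then show ?case using assms(1) unfolding gmodule_def by simp
qed

lemma ideal_mult_iff: "x \<in> ideal_mult I J \<longleftrightarrow> (\<exists>n f g. x = (\<Sum>i<(n::nat). f i * g i) \<and> (\<forall>i<n. f i \<in> I \<and> g i \<in> J))"
  unfolding ideal_mult_def by blast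

lemma prod_right: "x \<in> ideal_prod ms \<Longrightarrow> x * r \<in> ideal_prod ms"
proof (induction ms arbitrary: x)
  case Nil then show ?case by simp
next
  case (Cons m rest)
  from Cons.prems have "x \<in> ideal_mult m (ideal_prod rest)" by simp
  then obtain n f g where x: "x = (\<Sum>i<(n::nat). f i * g i)" and fg: "\<forall>i<n. f i \<in> m \<and> g i \<in> ideal_prod rest"
    unfolding ideal_mult_iff by blast
  have e: "x * r = (\<Sum>i<n. f i * (g i * r))" unfolding x by (simp add: sum_distrib_right mult.assoc)
  have f: "\<forall>i<n. f i \<in> m \<and> g i * r \<in> ideal_prod rest" using fg Cons.IH by blast
  have "x * r \<in> ideal_mult m (ideal_prod rest)" unfolding ideal_mult_iff
    apply (rule exI[of _ n], rule exI[of _ f], rule exI[of _ "\<lambda>i. g i * r"])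
    using e f by blast
  then show ?case by simp
qed

lemma mult_in: assumes "x \<in> I" "y \<in> J" shows "x * y \<in> ideal_mult I J"
  unfolding ideal_mult_iff
  apply (rule exI[of _ "Suc 0"], rule exI[of _ "\<lambda>_. x"], rule exI[of _ "\<lambda>_. y"])
  using assms by simp

lemma span_sub: assumes gm: "gmodule act" and subN: "submodule act N"
  shows "submodule act {z. \<exists>n\<in>N. \<exists>a. z = n + act a u}" (is "submodule act ?L")
  unfolding submodule_def
proof (intro conjI)
  have "(0::'b) = 0 + act 0 u" using act0[OF gm] by simp
  moreover have "(0::'b) \<in> N" using subN unfolding submodule_def by blast
  ultimately show "0 \<in> ?L" by blast
next
  show "\<forall>v\<in>?L. \<forall>w\<in>?L. v + w \<in> ?L"
  proof (intro ballI)
    fix v w assume "v \<in> ?L" "w \<in> ?L"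
    then obtain n1 a n2 b where h: "n1 \<in> N" "v = n1 + act a u" "n2 \<in> N" "w = n2 + act b u"
      by blast
    have "act (a+b) u = act a u + act b u" using gm unfolding gmodule_def by blast
    then have "v + w = (n1 + n2) + act (a+b) u" using h by (simp add: algebra_simps)
    moreover have "n1 + n2 \<in> N" using subN h unfolding submodule_def by blast
    ultimately show "v + w \<in> ?L" by blast
  qed
next
  show "\<forall>c. \<forall>v\<in>?L. act c v \<in> ?L"
  proof (intro allI ballI)
    fix c v assume "v \<in> ?L"
    then obtain n a where h: "n \<in> N" "v = n + act a u" by blast
    have "act c v = act c n + act (c*a) u" using gm h unfolding gmodule_def by simp
    moreover have "act c n \<in> N" using subN h unfolding submodule_def by blast
    ultimately show "act c v \<in> ?L" by blast
  qed
qed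

lemma lemA:
  assumes gm: "gmodule act" and ss: "simple_subquot act N M"
    and ideals: "\<forall>m\<in>set ms. two_sided_ideal m"
    and "w \<in> M" "w \<notin> N" "\<forall>x\<in>ideal_prod ms. act x w \<in> N"
  shows "\<exists>m\<in>set ms. \<forall>x\<in>m. \<forall>u\<in>M. act x u \<in> N"
  using assms(3-)
proof (induction ms)
  case Nil
  then have "act 1 w \<in> N" by simp
  then show ?case using Nil gm unfolding gmodule_def by simp
next
  case (Cons m rest)
  have ssd: "submodule act N \<and> submodule act M \<and> N \<subset> M \<and>
     (\<forall>L. submodule act L \<and> N \<subseteq> L \<and> L \<subseteq> M \<longrightarrow> L = N \<or> L = M)"
    using ss unfolding simple_subquot_def .
  have subN: "submodule act N" using ssd by (rule conjunct1)
  have subM: "submodule act M" using ssd by blast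
  have NM: "N \<subset> M" using ssd by blast
  have max: "\<forall>L. submodule act L \<and> N \<subseteq> L \<and> L \<subseteq> M \<longrightarrow> L = N \<or> L = M" using ssd by blast
  show ?case
  proof (cases "\<forall>y\<in>ideal_prod rest. act y w \<in> N")
    case True
    have p: "\<forall>m\<in>set rest. two_sided_ideal m" using Cons.prems(1) by simp
    obtain m' where "m' \<in> set rest" "\<forall>x\<in>m'. \<forall>u\<in>M. act x u \<in> N"
      using Cons.IH[OF p Cons.prems(2) Cons.prems(3) True] by blast
    then show ?thesis by (meson list.set_intros(2))
  next
    case False
    then obtain y where y: "y \<in> ideal_prod rest" "act y w \<notin> N" by blast
    define u where "u = act y w"
    have uM: "u \<in> M" using subM Cons.prems unfolding u_def submodule_def by blast
    have tm: "two_sided_ideal m" using Cons.prems by simp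
    have ku: "act x u \<in> N" if "x \<in> m" for x
    proof -
      have "x * y \<in> ideal_prod (m # rest)" using mult_in[OF that y(1)] by simp
      then have "act (x*y) w \<in> N" using Cons.prems by blast
      then show ?thesis using gm unfolding u_def gmodule_def by simp
    qed
    define L where "L = {z. \<exists>n\<in>N. \<exists>a. z = n + act a u}"
    have "submodule act L" unfolding L_def using span_sub[OF gm subN] .
    moreover have "N \<subseteq> L"
    proof
      fix z assume "z \<in> N"
      moreover have "z = z + act 0 u" using act0[OF gm] by simp
      ultimately show "z \<in> L" unfolding L_def by blast
    qed
    moreover have "L \<subseteq> M"
    proof
      fix z assume "z \<in> L"
      then obtain n a where "n \<in> N" "z = n + act a u" unfolding L_def by blast
      then show "z \<in> M" using NM subM uM unfolding submodule_def by blast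
    qed
    moreover have "u \<in> L"
    proof -
      have "u = 0 + act 1 u" using gm unfolding gmodule_def by simp
      then show ?thesis unfolding L_def using subN unfolding submodule_def by blast
    qed
    moreover have "u \<notin> N" using y u_def by simp
    ultimately have LM: "L = M" using max by blast
    have "\<forall>x\<in>m. \<forall>z\<in>M. act x z \<in> N"
    proof (intro ballI)
      fix x z assume x: "x \<in> m" and "z \<in> M"
      then have "z \<in> L" using LM by simp
      then obtain n a where n: "n \<in> N" and z: "z = n + act a u" unfolding L_def by blast
      have "act x z = act x n + act (x*a) u" using gm unfolding z gmodule_def by simp
      moreover have "x * a \<in> m" using tm x unfolding two_sided_ideal_def by blast
      ultimately show "act x z \<in> N" using ku subN n unfolding submodule_def by simp
    qed
    then show ?thesis by (meson list.set_intros(1))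
  qed
qed

lemma lemH:
  assumes gm: "gmodule act" and ss: "simple_subquot act N M" and fin: "finite I"
  shows "\<And>w g. \<forall>i\<in>I. \<forall>m\<in>set (ms i). two_sided_ideal m \<Longrightarrow>
    \<forall>i\<in>I. \<forall>x\<in>ideal_prod (ms i). act x (g i) = 0 \<Longrightarrow>
    w \<in> M \<Longrightarrow> w \<notin> N \<Longrightarrow> w = (\<Sum>i\<in>I. g i) \<Longrightarrow>
    \<exists>i\<in>I. \<exists>m\<in>set (ms i). \<forall>x\<in>m. \<forall>u\<in>M. act x u \<in> N"
  using fin
proof (induction I rule: finite_induct)
  case empty
  then show ?case using ss unfolding simple_subquot_def submodule_def by simp
next
  case (insert i I w g)
  have subM: "submodule act M" using ss unfolding simple_subquot_def by blast
  show ?case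
  proof (cases "\<forall>x\<in>ideal_prod (ms i). act x w \<in> N")
    case True
    then show ?thesis using lemA[OF gm ss, of "ms i" w] insert.prems by auto
  next
    case False
    then obtain y where y: "y \<in> ideal_prod (ms i)" "act y w \<notin> N" by blast
    have "act y w = act y (g i) + act y (\<Sum>j\<in>I. g j)"
      using insert gm unfolding gmodule_def by simp
    also have "\<dots> = (\<Sum>j\<in>I. act y (g j))" using insert y act_sum[OF gm] by simp
    finally have eq: "act y w = (\<Sum>j\<in>I. act y (g j))" .
    have k: "\<forall>j\<in>I. \<forall>x\<in>ideal_prod (ms j). act x (act y (g j)) = 0"
    proof (intro ballI)
      fix j x assume "j \<in> I" "x \<in> ideal_prod (ms j)"
      then have "x * y \<in> ideal_prod (ms j)" by (rule_tac prod_right) 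
      then show "act x (act y (g j)) = 0" using insert.prems \<open>j \<in> I\<close> gm unfolding gmodule_def
        by (metis insertCI)
    qed
    have "act y w \<in> M" using subM insert.prems unfolding submodule_def by blast
    moreover have p1: "\<forall>i\<in>I. \<forall>m\<in>set (ms i). two_sided_ideal m" using insert.prems(1) by blast
    ultimately have "\<exists>i\<in>I. \<exists>m\<in>set (ms i). \<forall>x\<in>m. \<forall>u\<in>M. act x u \<in> N"
      using insert.IH[OF p1 k _ y(2) eq] by blast
    then show ?thesis by blast
  qed
qed

theorem mainTheorem16:
  fixes amap :: "'k::field \<Rightarrow> 'a::ring_1"
    and R :: "'a set rel"
    and act :: "'a \<Rightarrow> 'v::ab_group_add \<Rightarrow> 'v"
  assumes "k_algebra amap"
    and "equiv (cfs amap) R"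
    and "gmodule act"
    and "fin_dim amap act"
    and "block_module amap R act"
    and "composition_factor act N M"
  shows "\<exists>B\<in>Supp amap R act. \<exists>m\<in>B. subquot_iso_S act m N M"
proof -
  have ss: "simple_subquot act N M" using assms(6)
    unfolding composition_factor_def composition_series_def by blast
  then obtain v where v: "v \<in> M" "v \<notin> N" unfolding simple_subquot_def by blast
  obtain Bs f where Bs: "finite Bs" "Bs \<subseteq> cfs amap // R" "\<forall>B\<in>Bs. f B \<in> Vpart act B"
    "v = (\<Sum>B\<in>Bs. f B)" using assms(5) unfolding block_module_def by blast
  define I where "I = {B\<in>Bs. f B \<noteq> 0}"
  have vI: "v = (\<Sum>B\<in>I. f B)" unfolding I_def Bs(4) using Bs(1)
    by (rule_tac sum.mono_neutral_right) auto
  have "\<forall>B\<in>I. \<exists>ms. set ms \<subseteq> B \<and> (\<forall>x\<in>ideal_prod ms. act x (f B) = 0)"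
    using Bs(3) unfolding I_def Vpart_def W_def by fastforce
  then obtain ms where ms: "\<forall>B\<in>I. set (ms B) \<subseteq> B \<and> (\<forall>x\<in>ideal_prod (ms B). act x (f B) = 0)"
    by metis
  have Bc: "B \<subseteq> cfs amap" if "B \<in> I" for B
  proof -
    have "B \<in> cfs amap // R" using that Bs(2) unfolding I_def by blast
    then have "B \<subseteq> \<Union>(cfs amap // R)" by (rule Union_upper)
    then show ?thesis using Union_quotient[OF assms(2)] by simp
  qed
  have id: "\<forall>i\<in>I. \<forall>m\<in>set (ms i). two_sided_ideal m"
    using ms Bc unfolding cfs_def maximal_two_sided_ideal_def by blast
  have "finite I" using Bs(1) unfolding I_def by simp
  from lemH[OF assms(3) ss this id] ms v vI
  obtain B m where B: "B \<in> I" "m \<in> set (ms B)" "\<forall>x\<in>m. \<forall>u\<in>M. act x u \<in> N" by blast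
  have "B \<in> Supp amap R act" using B(1) Bs unfolding I_def Supp_def by auto
  moreover have "m \<in> B" using ms B by blast
  ultimately show ?thesis using B ss unfolding subquot_iso_S_def by blast
qed

end
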